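(* Let $H$ be a bipartite matching covered graph and $u$ a vertex of $H$ of degree at least three. If $f_1$ and $f_2$ are two edges incident with $u$ that lie in a common 4-cycle of $H$, then at least one of $f_1,f_2$ is removable in $H$.
   Context: Graphs may have multiple edges but no loops. An edge is admissible if it lies in some perfect matching. A connected graph with at least two vertices is matching covered if every edge is admissible. An edge $e$ of a matching covered graph $H$ is removable if $H-e$ is matching covered. *)

theory Defs
  imports Main
begin

text \<open>A finite loopless multigraph: vertex set V, edge set E (edge identifiers),
  and an incidence map ends giving the two distinct endpoints of each edge.\<close>

definition multigraph :: "'v set \<Rightarrow> 'e set \<Rightarrow> ('e \<Rightarrow> 'v set) \<Rightarrow> bool" where
  "multigraph V E ends \<longleftrightarrow> finite V \<and> finite E \<and>
     (\<forall>e\<in>E. ends e \<subseteq> V \<and> card (ends e) = 2)"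

definition perfect_matching :: "'v set \<Rightarrow> 'e set \<Rightarrow> ('e \<Rightarrow> 'v set) \<Rightarrow> 'e set \<Rightarrow> bool" where
  "perfect_matching V E ends M \<longleftrightarrow> M \<subseteq> E \<and> (\<forall>v\<in>V. \<exists>!e. e \<in> M \<and> v \<in> ends e)"

definition admissible :: "'v set \<Rightarrow> 'e set \<Rightarrow> ('e \<Rightarrow> 'v set) \<Rightarrow> 'e \<Rightarrow> bool" where
  "admissible V E ends e \<longleftrightarrow> (\<exists>M. perfect_matching V E ends M \<and> e \<in> M)"

definition adj_rel :: "'e set \<Rightarrow> ('e \<Rightarrow> 'v set) \<Rightarrow> ('v \<times> 'v) set" where
  "adj_rel E ends = {(x, y). \<exists>e\<in>E. ends e = {x, y}}"

definition graph_connected :: "'v set \<Rightarrow> 'e set \<Rightarrow> ('e \<Rightarrow> 'v set) \<Rightarrow> bool" where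
  "graph_connected V E ends \<longleftrightarrow> V \<noteq> {} \<and> (\<forall>x\<in>V. \<forall>y\<in>V. (x, y) \<in> (adj_rel E ends)\<^sup>*)"

definition matching_covered :: "'v set \<Rightarrow> 'e set \<Rightarrow> ('e \<Rightarrow> 'v set) \<Rightarrow> bool" where
  "matching_covered V E ends \<longleftrightarrow> multigraph V E ends \<and> graph_connected V E ends \<and>
     card V \<ge> 2 \<and> (\<forall>e\<in>E. admissible V E ends e)"

definition removable :: "'v set \<Rightarrow> 'e set \<Rightarrow> ('e \<Rightarrow> 'v set) \<Rightarrow> 'e \<Rightarrow> bool" where
  "removable V E ends e \<longleftrightarrow> e \<in> E \<and> matching_covered V (E - {e}) ends"

definition bipartite :: "'v set \<Rightarrow> 'e set \<Rightarrow> ('e \<Rightarrow> 'v set) \<Rightarrow> bool" where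
  "bipartite V E ends \<longleftrightarrow> (\<exists>A B. A \<union> B = V \<and> A \<inter> B = {} \<and>
     (\<forall>e\<in>E. \<exists>a\<in>A. \<exists>b\<in>B. ends e = {a, b}))"

definition degree :: "'e set \<Rightarrow> ('e \<Rightarrow> 'v set) \<Rightarrow> 'v \<Rightarrow> nat" where
  "degree E ends v = card {e\<in>E. v \<in> ends e}"

definition in_common_4cycle :: "'v set \<Rightarrow> 'e set \<Rightarrow> ('e \<Rightarrow> 'v set) \<Rightarrow> 'e \<Rightarrow> 'e \<Rightarrow> bool" where
  "in_common_4cycle V E ends f1 f2 \<longleftrightarrow>
     (\<exists>u a w b f3 f4. distinct [u, a, w, b] \<and> {u, a, w, b} \<subseteq> V \<and>
        f1 \<in> E \<and> f2 \<in> E \<and> f3 \<in> E \<and> f4 \<in> E \<and>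
        ends f1 = {u, a} \<and> ends f3 = {a, w} \<and> ends f4 = {w, b} \<and> ends f2 = {b, u})"

end

theory Submission
  imports Defs
begin

definition nbr :: "'e set \<Rightarrow> ('e \<Rightarrow> 'v set) \<Rightarrow> 'v set \<Rightarrow> 'v set" where
  "nbr E ends Z = {v. \<exists>g\<in>E. \<exists>z\<in>Z. ends g = {z, v}}"

definition mate :: "'e set \<Rightarrow> ('e \<Rightarrow> 'v set) \<Rightarrow> 'v \<Rightarrow> 'v" where
  "mate M ends v = (THE t. \<exists>g\<in>M. ends g = {v, t})"

lemma other_side:
  assumes "A \<inter> B = {}" "ends g = {a, b}" "a \<in> A" "b \<in> B" "ends g = {p, q}"
  shows "p \<in> A \<Longrightarrow> q \<in> B" and "p \<in> B \<Longrightarrow> q \<in> A"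
  using assms by (auto simp: doubleton_eq_iff)

lemma side:
  assumes "A \<inter> B = {}" "\<forall>g\<in>E. \<exists>a\<in>A. \<exists>b\<in>B. ends g = {a, b}" "g \<in> E" "ends g = {p, q}"
  shows "p \<in> A \<Longrightarrow> q \<in> B" and "p \<in> B \<Longrightarrow> q \<in> A"
proof -
  obtain a b where ab: "a \<in> A" "b \<in> B" "ends g = {a, b}" using assms by blast
  show "p \<in> A \<Longrightarrow> q \<in> B" using other_side(1)[of A B ends g a b p q, OF assms(1) ab(3) ab(1) ab(2) assms(4)] .
  show "p \<in> B \<Longrightarrow> q \<in> A" using other_side(2)[of A B ends g a b p q, OF assms(1) ab(3) ab(1) ab(2) assms(4)] .
qed

lemma mate_props:
  assumes mg: "multigraph V E ends" and pm: "perfect_matching V E ends M" and v: "v \<in> V"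
  shows "\<exists>g\<in>M. ends g = {v, mate M ends v}"
    and "\<forall>g\<in>M. v \<in> ends g \<longrightarrow> ends g = {v, mate M ends v}"
    and "mate M ends v \<noteq> v"
proof -
  from pm v obtain g where g: "g \<in> M" "v \<in> ends g" and uq: "\<And>g'. g' \<in> M \<Longrightarrow> v \<in> ends g' \<Longrightarrow> g' = g"
    unfolding perfect_matching_def by metis
  have "g \<in> E" using g pm unfolding perfect_matching_def by auto
  hence "card (ends g) = 2" using mg unfolding multigraph_def by auto
  then obtain x y where xy: "ends g = {x, y}" "x \<noteq> y" by (auto simp: card_2_iff)
  then obtain t where t: "ends g = {v, t}" "t \<noteq> v" using g by auto
  have ex1: "\<exists>!t. \<exists>g\<in>M. ends g = {v, t}"
  proof
    show "\<exists>g\<in>M. ends g = {v, t}" using g t by auto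
  next
    fix t' assume "\<exists>g\<in>M. ends g = {v, t'}"
    then obtain g' where "g' \<in> M" "ends g' = {v, t'}" by auto
    moreover hence "g' = g" using uq by auto
    ultimately show "t' = t" using t by (auto simp: doubleton_eq_iff)
  qed
  hence m: "\<exists>g\<in>M. ends g = {v, mate M ends v}" unfolding mate_def by (rule theI')
  then show "\<exists>g\<in>M. ends g = {v, mate M ends v}" .
  obtain g' where g': "g' \<in> M" "ends g' = {v, mate M ends v}" using m by auto
  have "g' = g" using g' by (intro uq) auto
  hence mt: "{v, mate M ends v} = {v, t}" using g' t by auto
  have "mate M ends v = t" using mt t(2) by (auto simp: doubleton_eq_iff)
  then show "mate M ends v \<noteq> v" using t by auto
  show "\<forall>g\<in>M. v \<in> ends g \<longrightarrow> ends g = {v, mate M ends v}"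
  proof (intro ballI impI)
    fix h assume "h \<in> M" "v \<in> ends h"
    hence "h = g" by (rule uq)
    thus "ends h = {v, mate M ends v}" using g' \<open>g' = g\<close> by simp
  qed
qed

lemma mate_mate:
  assumes mg: "multigraph V E ends" and pm: "perfect_matching V E ends M" and v: "v \<in> V"
  shows "mate M ends v \<in> V" "mate M ends (mate M ends v) = v"
proof -
  obtain g where g: "g \<in> M" "ends g = {v, mate M ends v}" using mate_props(1)[OF assms] by auto
  have "g \<in> E" using g pm unfolding perfect_matching_def by auto
  thus mv: "mate M ends v \<in> V" using mg g unfolding multigraph_def by auto
  have "ends g = {mate M ends v, mate M ends (mate M ends v)}"
    using mate_props(2)[OF mg pm mv] g by auto
  moreover have "mate M ends v \<noteq> v" using mate_props(3)[OF assms] .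
  ultimately show "mate M ends (mate M ends v) = v" using g by (auto simp: doubleton_eq_iff)
qed

lemma nbr_sub_V:
  assumes "multigraph V E ends" shows "nbr E ends Z \<subseteq> V"
  using assms unfolding multigraph_def nbr_def by auto

lemma nbr_side:
  assumes "A \<inter> B = {}" "\<forall>g\<in>E. \<exists>a\<in>A. \<exists>b\<in>B. ends g = {a, b}" "Z \<subseteq> A"
  shows "nbr E ends Z \<subseteq> B"
proof
  fix v assume "v \<in> nbr E ends Z"
  then obtain g z where "g \<in> E" "z \<in> Z" "ends g = {z, v}" unfolding nbr_def by auto
  with assms show "v \<in> B" using side(1)[OF assms(1,2)] by blast
qed

lemma mate_side:
  assumes mg: "multigraph V E ends" and pm: "perfect_matching V E ends M"
    and AB: "A \<inter> B = {}" "\<forall>g\<in>E. \<exists>a\<in>A. \<exists>b\<in>B. ends g = {a, b}" "A \<union> B = V"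
  shows "v \<in> A \<Longrightarrow> mate M ends v \<in> B" "v \<in> B \<Longrightarrow> mate M ends v \<in> A"
proof -
  assume v: "v \<in> A"
  hence vV: "v \<in> V" using AB by auto
  obtain g where g: "g \<in> M" "ends g = {v, mate M ends v}" using mate_props(1)[OF mg pm vV] by auto
  have "g \<in> E" using g pm unfolding perfect_matching_def by auto
  with AB g v show "mate M ends v \<in> B" using side(1)[OF AB(1,2)] by blast
next
  assume v: "v \<in> B"
  hence vV: "v \<in> V" using AB by auto
  obtain g where g: "g \<in> M" "ends g = {v, mate M ends v}" using mate_props(1)[OF mg pm vV] by auto
  have "g \<in> E" using g pm unfolding perfect_matching_def by auto
  with AB g v show "mate M ends v \<in> A" using side(2)[OF AB(1,2)] by blast
qed

lemma hall_inj:
  assumes mg: "multigraph V E ends" and pm: "perfect_matching V E ends M"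
    and AB: "A \<inter> B = {}" "\<forall>g\<in>E. \<exists>a\<in>A. \<exists>b\<in>B. ends g = {a, b}" "A \<union> B = V"
    and Z: "Z \<subseteq> A"
  shows "mate M ends ` Z \<subseteq> nbr E ends Z" "inj_on (mate M ends) Z"
proof -
  show "mate M ends ` Z \<subseteq> nbr E ends Z"
  proof
    fix t assume "t \<in> mate M ends ` Z"
    then obtain z where z: "z \<in> Z" "t = mate M ends z" by auto
    hence "z \<in> V" using Z AB by auto
    then obtain g where g: "g \<in> M" "ends g = {z, mate M ends z}" using mate_props(1)[OF mg pm] by auto
    have "g \<in> E" using g pm unfolding perfect_matching_def by auto
    thus "t \<in> nbr E ends Z" using g z unfolding nbr_def by auto
  qed
  show "inj_on (mate M ends) Z"
  proof
    fix x y assume "x \<in> Z" "y \<in> Z" "mate M ends x = mate M ends y"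
    moreover have "x \<in> V" "y \<in> V" using \<open>x \<in> Z\<close> \<open>y \<in> Z\<close> Z AB by auto
    ultimately show "x = y" using mate_mate(2)[OF mg pm] by metis
  qed
qed

lemma exit_edge:
  assumes "(p, q) \<in> r\<^sup>*" "p \<in> S" "q \<notin> S"
  shows "\<exists>s s'. (s, s') \<in> r \<and> s \<in> S \<and> s' \<notin> S"
  using assms by (induction rule: rtrancl_induct) auto

lemma strict_hall:
  assumes mc: "matching_covered V E ends"
    and AB: "A \<inter> B = {}" "\<forall>g\<in>E. \<exists>a\<in>A. \<exists>b\<in>B. ends g = {a, b}" "A \<union> B = V"
    and Z: "Z \<subseteq> A" "Z \<noteq> {}" "t \<in> A" "t \<notin> Z"
  shows "card Z + 1 \<le> card (nbr E ends Z)"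
proof -
  have mg: "multigraph V E ends" using mc unfolding matching_covered_def by auto
  have fV: "finite V" using mg unfolding multigraph_def by auto
  obtain z where z: "z \<in> Z" using Z by auto
  have "(z, t) \<in> (adj_rel E ends)\<^sup>*" using mc z Z AB unfolding matching_covered_def graph_connected_def by blast
  moreover have "t \<notin> Z \<union> nbr E ends Z" using nbr_side[OF AB(1,2) Z(1)] Z AB by auto
  ultimately obtain s s' where ss: "(s, s') \<in> adj_rel E ends" "s \<in> Z \<union> nbr E ends Z" "s' \<notin> Z \<union> nbr E ends Z"
    using exit_edge[of z t _ "Z \<union> nbr E ends Z"] z by blast
  then obtain g where g: "g \<in> E" "ends g = {s, s'}" unfolding adj_rel_def by auto
  have "s \<notin> Z" using ss g unfolding nbr_def by auto
  hence sN: "s \<in> nbr E ends Z" using ss by auto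
  hence sB: "s \<in> B" using nbr_side[OF AB(1,2) Z(1)] by auto
  hence s'A: "s' \<in> A" using side(2)[OF AB(1,2) g] by blast
  have "admissible V E ends g" using mc g unfolding matching_covered_def by auto
  then obtain M where M: "perfect_matching V E ends M" "g \<in> M" unfolding admissible_def by auto
  have sV: "s \<in> V" using sB AB by auto
  have "ends g = {s, mate M ends s}" using mate_props(2)[OF mg M(1) sV] M g by auto
  hence ms: "mate M ends s = s'" using g sB s'A AB by (auto simp: doubleton_eq_iff)
  have "mate M ends ` Z \<subseteq> nbr E ends Z - {s}"
  proof -
    have "s \<notin> mate M ends ` Z"
    proof
      assume "s \<in> mate M ends ` Z"
      then obtain x where x: "x \<in> Z" "s = mate M ends x" by auto
      hence "x \<in> V" using Z AB by auto
      hence "mate M ends s = x" using x mate_mate(2)[OF mg M(1)] by metis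
      thus False using ms x ss by auto
    qed
    thus ?thesis using hall_inj(1)[OF mg M(1) AB Z(1)] by auto
  qed
  moreover have fN: "finite (nbr E ends Z)" using finite_subset[OF nbr_sub_V[OF mg] fV] .
  ultimately have "card (mate M ends ` Z) \<le> card (nbr E ends Z - {s})"
    by (intro card_mono) auto
  moreover have "card (mate M ends ` Z) = card Z" using hall_inj(2)[OF mg M(1) AB Z(1)] by (rule card_image)
  moreover have "card (nbr E ends Z) > 0" using fN sN card_gt_0_iff by blast
  ultimately show ?thesis using sN fN by (simp add: card_Diff_singleton)
qed

definition pmx :: "'v set \<Rightarrow> 'e set \<Rightarrow> ('e \<Rightarrow> 'v set) \<Rightarrow> 'e set \<Rightarrow> 'v set \<Rightarrow> bool" where
  "pmx V E ends M S \<longleftrightarrow> M \<subseteq> E \<and> (\<forall>t\<in>V - S. \<exists>!g. g \<in> M \<and> t \<in> ends g) \<and> (\<forall>g\<in>M. \<forall>t\<in>S. t \<notin> ends g)"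

lemma pm_unique:
  assumes "perfect_matching V E ends M" "t \<in> V" "g \<in> M" "g' \<in> M" "t \<in> ends g" "t \<in> ends g'"
  shows "g = g'"
  using assms unfolding perfect_matching_def by metis

lemma pmxD:
  assumes "pmx V E ends M S"
  shows "M \<subseteq> E" "\<And>g t. g \<in> M \<Longrightarrow> t \<in> S \<Longrightarrow> t \<notin> ends g"
    "\<And>t. t \<in> V \<Longrightarrow> t \<notin> S \<Longrightarrow> \<exists>g\<in>M. t \<in> ends g"
  using assms unfolding pmx_def by blast+

lemma pmx_unique:
  assumes "pmx V E ends M S" "t \<in> V" "t \<notin> S" "g \<in> M" "g' \<in> M" "t \<in> ends g" "t \<in> ends g'"
  shows "g = g'"
proof -
  have "\<exists>!g. g \<in> M \<and> t \<in> ends g" using assms unfolding pmx_def by auto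
  thus ?thesis using assms by metis
qed

lemma koenig:
  assumes mg: "multigraph V E ends" and pm: "perfect_matching V E ends M"
    and AB: "A \<inter> B = {}" "\<forall>g\<in>E. \<exists>a\<in>A. \<exists>b\<in>B. ends g = {a, b}" "A \<union> B = V"
    and e: "e \<in> E" "ends e = {x, y}" "x \<in> A" "y \<in> B"
    and nadm: "\<not> admissible V E ends e"
  shows "\<exists>X\<subseteq>A. x \<notin> X \<and> y \<in> nbr E ends X \<and> card (nbr E ends X) \<le> card X"
proof -
  let ?m = "mate M ends"
  define x0 where "x0 = ?m y"
  define R where "R = {(z, z'). \<exists>g\<in>E. \<exists>v\<in>B. ends g = {z, v} \<and> z' = ?m v}"
  define X where "X = {z. (x0, z) \<in> R\<^sup>*}"
  have fV: "finite V" using mg unfolding multigraph_def by auto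
  have yV: "y \<in> V" using e AB by auto
  have x0A: "x0 \<in> A" unfolding x0_def using mate_side(2)[OF mg pm AB] e by blast
  have RA: "z \<in> A" if "(x0, z) \<in> R\<^sup>*" for z
    using that
  proof (induction rule: rtrancl_induct)
    case base thus ?case using x0A .
  next
    case (step a c) thus ?case unfolding R_def using mate_side(2)[OF mg pm AB] by blast
  qed
  have XA: "X \<subseteq> A" unfolding X_def using RA by blast
  have fX: "finite X" using XA AB fV by (auto intro: finite_subset)
  have AV: "A \<subseteq> V" using AB by auto
  have BV: "B \<subseteq> V" using AB by auto
  have "nbr E ends X \<subseteq> ?m ` X"
  proof
    fix v assume "v \<in> nbr E ends X"
    then obtain g z where g: "g \<in> E" "z \<in> X" "ends g = {z, v}" unfolding nbr_def by auto
    have "v \<in> B" using side(1)[OF AB(1,2) g(1,3)] g(2) XA by blast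
    hence "(z, ?m v) \<in> R" unfolding R_def using g by blast
    hence "?m v \<in> X" using g(2) unfolding X_def by auto
    moreover have "?m (?m v) = v" using mate_mate(2)[OF mg pm] \<open>v \<in> B\<close> BV by blast
    ultimately show "v \<in> ?m ` X" by (metis image_eqI)
  qed
  hence cardle: "card (nbr E ends X) \<le> card X"
    using card_mono[OF finite_imageI[OF fX]] card_image_le[OF fX] le_trans by blast
  obtain g0 where g0: "g0 \<in> M" "ends g0 = {y, x0}" using mate_props(1)[OF mg pm yV] unfolding x0_def by auto
  have g0E: "g0 \<in> E" using g0 pm unfolding perfect_matching_def by auto
  have x0X: "x0 \<in> X" unfolding X_def by auto
  have yN: "y \<in> nbr E ends X" unfolding nbr_def using g0E g0 x0X by (auto simp: insert_commute)
  have key: "\<exists>M'. pmx V E ends M' {y, z} \<and>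
      (\<forall>g\<in>M. \<forall>v\<in>B. v \<in> ends g \<longrightarrow> (\<forall>j\<le>n. (x0, ?m v) \<notin> R ^^ j) \<longrightarrow> g \<in> M')"
    if "(x0, z) \<in> R ^^ n" "\<forall>j<n. (x0, z) \<notin> R ^^ j" for n z
    using that
  proof (induction n arbitrary: z)
    case 0
    hence z: "z = x0" by simp
    define M' where "M' = M - {g0}"
    have x0V: "x0 \<in> V" using x0A AV by auto
    have "pmx V E ends M' {y, z}"
      unfolding pmx_def
    proof (intro conjI ballI)
      show "M' \<subseteq> E" using pm unfolding M'_def perfect_matching_def by auto
    next
      fix t assume t: "t \<in> V - {y, z}"
      then obtain gt where gt: "gt \<in> M" "t \<in> ends gt" using pm unfolding perfect_matching_def by blast
      have "gt \<noteq> g0" using t gt g0 z by auto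
      show "\<exists>!g. g \<in> M' \<and> t \<in> ends g"
      proof (rule ex1I[of _ gt])
        show "gt \<in> M' \<and> t \<in> ends gt" using gt \<open>gt \<noteq> g0\<close> unfolding M'_def by auto
      next
        fix g assume "g \<in> M' \<and> t \<in> ends g"
        thus "g = gt" using pm_unique[OF pm _ _ gt(1)] t gt unfolding M'_def by blast
      qed
    next
      fix g t assume g: "g \<in> M'" and t: "t \<in> {y, z}"
      show "t \<notin> ends g"
      proof
        assume "t \<in> ends g"
        moreover have "t \<in> V" "t \<in> ends g0" using t yV x0V z g0 by auto
        ultimately have "g = g0" using pm_unique[OF pm _ _ g0(1)] g unfolding M'_def by blast
        thus False using g unfolding M'_def by auto
      qed
    qed
    moreover have "\<forall>g\<in>M. \<forall>v\<in>B. v \<in> ends g \<longrightarrow> (\<forall>j\<le>0. (x0, ?m v) \<notin> R ^^ j) \<longrightarrow> g \<in> M'"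
    proof (intro ballI impI)
      fix g v assume g: "g \<in> M" "v \<in> B" "v \<in> ends g" "\<forall>j\<le>0. (x0, ?m v) \<notin> R ^^ j"
      hence mv: "?m v \<noteq> x0" by auto
      show "g \<in> M'"
      proof (rule ccontr)
        assume "g \<notin> M'"
        hence "g = g0" using g unfolding M'_def by auto
        hence "v = y \<or> v = x0" using g g0 by auto
        thus False using mv x0_def x0A g(2) AB(1) by auto
      qed
    qed
    ultimately show ?case by blast
  next
    case (Suc n z')
    from Suc.prems(1) obtain z where zn: "(x0, z) \<in> R ^^ n" and zz': "(z, z') \<in> R" by auto
    have minz: "\<forall>j<n. (x0, z) \<notin> R ^^ j"
    proof (intro allI impI)
      fix j assume "j < n"
      show "(x0, z) \<notin> R ^^ j"
      proof
        assume "(x0, z) \<in> R ^^ j"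
        hence "(x0, z') \<in> R ^^ Suc j" using zz' by auto
        moreover have "Suc j < Suc n" using \<open>j < n\<close> by simp
        ultimately show False using Suc.prems(2) by blast
      qed
    qed
    obtain M' where M': "pmx V E ends M' {y, z}"
      and M'c: "\<forall>g\<in>M. \<forall>v\<in>B. v \<in> ends g \<longrightarrow> (\<forall>j\<le>n. (x0, ?m v) \<notin> R ^^ j) \<longrightarrow> g \<in> M'"
      using Suc.IH[OF zn minz] by blast
    from zz' obtain g v where g: "g \<in> E" "v \<in> B" "ends g = {z, v}" "z' = ?m v"
      unfolding R_def by blast
    have zA: "z \<in> A" using RA zn relpow_imp_rtrancl by blast
    have vV: "v \<in> V" "z \<in> V" using g zA AB by auto
    obtain h where h: "h \<in> M" "ends h = {v, ?m v}" using mate_props(1)[OF mg pm vV(1)] by auto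
    have nz': "\<forall>j\<le>n. (x0, z') \<notin> R ^^ j" using Suc.prems(2) by auto
    have hM': "h \<in> M'" using M'c h g nz' by auto
    have vy: "v \<noteq> y"
    proof
      assume "v = y"
      hence "z' = x0" using g x0_def by simp
      thus False using nz' by (metis le0 relpow_0_I)
    qed
    have z'A: "z' \<in> A" using mate_side(2)[OF mg pm AB] g by blast
    have zz: "z \<noteq> z'" using nz' zn by auto
    have vz: "v \<noteq> z" "v \<noteq> z'" using zA z'A g AB(1) by auto
    have yz: "y \<noteq> z" "y \<noteq> z'" using zA z'A e AB(1) by auto
    have z'V: "z' \<in> V" using z'A AV by auto
    have gM': "g \<notin> M'" using pmxD(2)[OF M', of g z] g(3) by blast
    have M'E: "M' \<subseteq> E" using pmxD(1)[OF M'] .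
    have M'y: "\<And>g'. g' \<in> M' \<Longrightarrow> y \<notin> ends g' \<and> z \<notin> ends g'" using pmxD(2)[OF M'] by blast
    define M'' where "M'' = insert g (M' - {h})"
    have P1: "M'' \<subseteq> E" using M'E g(1) unfolding M''_def by blast
    have P2: "\<exists>!g'. g' \<in> M'' \<and> t \<in> ends g'" if t: "t \<in> V - {y, z'}" for t
    proof -
      show "\<exists>!g'. g' \<in> M'' \<and> t \<in> ends g'"
      proof (cases "t = z \<or> t = v")
        case True
        show ?thesis
        proof (rule ex1I[of _ g])
          show "g \<in> M'' \<and> t \<in> ends g" using True g unfolding M''_def by auto
        next
          fix g' assume g': "g' \<in> M'' \<and> t \<in> ends g'"
          show "g' = g"
          proof (rule ccontr)
            assume "g' \<noteq> g"
            hence g'M: "g' \<in> M'" "g' \<noteq> h" using g' unfolding M''_def by auto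
            show False
            proof (cases "t = z")
              case True thus False using M'y g'M g' by auto
            next
              case False
              hence "t = v" using \<open>t = z \<or> t = v\<close> by auto
              hence "g' = h" using pmx_unique[OF M' vV(1) _ g'M(1) hM'] g' h vy vz by auto
              thus False using g'M by auto
            qed
          qed
        qed
      next
        case False
        hence tV: "t \<in> V" "t \<notin> {y, z}" using t by auto
        then obtain gt where gt: "gt \<in> M'" "t \<in> ends gt" using pmxD(3)[OF M'] by blast
        have "gt \<noteq> h" using gt h g False t by auto
        show ?thesis
        proof (rule ex1I[of _ gt])
          show "gt \<in> M'' \<and> t \<in> ends gt" using gt \<open>gt \<noteq> h\<close> unfolding M''_def by auto
        next
          fix g' assume g': "g' \<in> M'' \<and> t \<in> ends g'"
          hence "g' \<in> M'" using False g unfolding M''_def by auto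
          thus "g' = gt" using pmx_unique[OF M' tV(1) tV(2) _ gt(1)] g' gt by blast
        qed
      qed
    qed
    have z'h: "z' \<in> ends h" using h g(4) by simp
    have z'S: "z' \<notin> {y, z}" using yz zz by auto
    have P3: "s \<notin> ends q" if qM: "q \<in> M''" and sS: "s \<in> {y, z'}" for q s
    proof
      assume sq: "s \<in> ends q"
      have "q = g \<or> (q \<in> M' \<and> q \<noteq> h)" using qM unfolding M''_def by blast
      then show False
      proof
        assume "q = g"
        hence "s = z \<or> s = v" using sq g(3) by simp
        moreover have "s = y \<or> s = z'" using sS by simp
        ultimately show False using vy vz yz zz by blast
      next
        assume qh: "q \<in> M' \<and> q \<noteq> h"
        have "s = y \<or> s = z'" using sS by simp
        then show False
        proof
          assume "s = y" thus False using M'y qh sq by blast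
        next
          assume "s = z'"
          hence "q = h" using pmx_unique[OF M' z'V z'S _ hM' _ z'h] qh sq by blast
          thus False using qh by blast
        qed
      qed
    qed
    have "pmx V E ends M'' {y, z'}" unfolding pmx_def using P1 P2 P3 by blast
    moreover have "\<forall>g2\<in>M. \<forall>v2\<in>B. v2 \<in> ends g2 \<longrightarrow> (\<forall>j\<le>Suc n. (x0, ?m v2) \<notin> R ^^ j) \<longrightarrow> g2 \<in> M''"
    proof (intro ballI impI)
      fix g2 v2 assume g2: "g2 \<in> M" "v2 \<in> B" "v2 \<in> ends g2" "\<forall>j\<le>Suc n. (x0, ?m v2) \<notin> R ^^ j"
      hence "g2 \<in> M'" using M'c by auto
      moreover have "g2 \<noteq> h"
      proof
        assume "g2 = h"
        hence "v2 = v \<or> v2 = z'" using g2 h g by auto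
        hence "v2 = v" using g2(2) z'A AB(1) by auto
        hence "?m v2 = z'" using g(4) by simp
        thus False using g2(4) Suc.prems(1) by (metis order_refl)
      qed
      ultimately show "g2 \<in> M''" unfolding M''_def by auto
    qed
    ultimately show ?case by blast
  qed
  have xX: "x \<notin> X"
  proof
    assume "x \<in> X"
    hence "\<exists>n. (x0, x) \<in> R ^^ n" unfolding X_def using rtrancl_imp_relpow by blast
    then obtain n where n: "(x0, x) \<in> R ^^ n" "\<forall>j<n. (x0, x) \<notin> R ^^ j"
      using exists_least_iff[of "\<lambda>n. (x0, x) \<in> R ^^ n"] by blast
    obtain M' where M': "pmx V E ends M' {y, x}" using key[OF n] by blast
    have "perfect_matching V E ends (insert e M')"
      unfolding perfect_matching_def
    proof (intro conjI ballI)
      show "insert e M' \<subseteq> E" using pmxD(1)[OF M'] e by auto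
    next
      fix t assume tV: "t \<in> V"
      show "\<exists>!g. g \<in> insert e M' \<and> t \<in> ends g"
      proof (cases "t \<in> {x, y}")
        case True
        show ?thesis
        proof (rule ex1I[of _ e])
          show "e \<in> insert e M' \<and> t \<in> ends e" using True e by auto
        next
          fix g assume "g \<in> insert e M' \<and> t \<in> ends g"
          thus "g = e" using pmxD(2)[OF M'] True by auto
        qed
      next
        case False
        then obtain gt where gt: "gt \<in> M'" "t \<in> ends gt" using pmxD(3)[OF M'] tV by blast
        show ?thesis
        proof (rule ex1I[of _ gt])
          show "gt \<in> insert e M' \<and> t \<in> ends gt" using gt by auto
        next
          fix g assume "g \<in> insert e M' \<and> t \<in> ends g"
          moreover hence "g \<in> M'" using False e by auto
          ultimately show "g = gt" using pmx_unique[OF M' tV _ _ gt(1)] False gt by (auto simp: insert_commute)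
        qed
      qed
    qed
    thus False using nadm unfolding admissible_def by auto
  qed
  show ?thesis using XA xX yN cardle by blast
qed

lemma conn_remove:
  assumes gc: "graph_connected V E ends" and f: "ends f = {p, q}"
    and pq: "(p, q) \<in> (adj_rel (E - {f}) ends)\<^sup>*" "(q, p) \<in> (adj_rel (E - {f}) ends)\<^sup>*"
  shows "graph_connected V (E - {f}) ends"
proof -
  have "adj_rel E ends \<subseteq> (adj_rel (E - {f}) ends)\<^sup>*"
  proof
    fix xy assume "xy \<in> adj_rel E ends"
    then obtain x y g where xy: "xy = (x, y)" "g \<in> E" "ends g = {x, y}" unfolding adj_rel_def by auto
    show "xy \<in> (adj_rel (E - {f}) ends)\<^sup>*"
    proof (cases "g = f")
      case True
      hence "(x = p \<and> y = q) \<or> (x = q \<and> y = p)" using xy f by (auto simp: doubleton_eq_iff)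
      thus ?thesis using pq xy by auto
    next
      case False
      hence "(x, y) \<in> adj_rel (E - {f}) ends" unfolding adj_rel_def using xy by auto
      thus ?thesis using xy by auto
    qed
  qed
  hence "(adj_rel E ends)\<^sup>* \<subseteq> (adj_rel (E - {f}) ends)\<^sup>*" by (rule rtrancl_subset_rtrancl)
  thus ?thesis using gc unfolding graph_connected_def by blast
qed

lemma adjI: "g \<in> E \<Longrightarrow> g \<noteq> f \<Longrightarrow> ends g = {x, y} \<Longrightarrow> (x, y) \<in> (adj_rel (E - {f}) ends)\<^sup>*"
  unfolding adj_rel_def by (rule r_into_rtrancl) auto

lemma side_set:
  assumes mc: "matching_covered V E ends"
    and AB: "A \<inter> B = {}" "\<forall>g\<in>E. \<exists>a\<in>A. \<exists>b\<in>B. ends g = {a, b}" "A \<union> B = V"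
    and f: "f \<in> E" "ends f = {u, a}" "u \<in> A" "a \<in> B"
    and gc: "graph_connected V (E - {f}) ends"
    and M: "perfect_matching V (E - {f}) ends M"
    and nr: "\<not> removable V E ends f"
  shows "\<exists>X\<subseteq>A. u \<in> X \<and> (\<forall>g\<in>E - {f}. \<forall>z\<in>X. ends g \<noteq> {z, a}) \<and> card (nbr E ends X) \<le> card X + 1"
proof -
  have mg: "multigraph V E ends" using mc unfolding matching_covered_def by auto
  have fV: "finite V" using mg unfolding multigraph_def by auto
  have mg': "multigraph V (E - {f}) ends" using mg unfolding multigraph_def by auto
  have AB': "\<forall>g\<in>E - {f}. \<exists>a\<in>A. \<exists>b\<in>B. ends g = {a, b}" using AB by auto
  have "\<not> matching_covered V (E - {f}) ends" using nr f unfolding removable_def by auto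
  then obtain e where e: "e \<in> E - {f}" "\<not> admissible V (E - {f}) ends e"
    using mg' gc mc unfolding matching_covered_def by auto
  obtain p q where pq: "p \<in> A" "q \<in> B" "ends e = {p, q}" using AB e by blast
  obtain X where X: "X \<subseteq> A" "p \<notin> X" "q \<in> nbr (E - {f}) ends X" "card (nbr (E - {f}) ends X) \<le> card X"
    using koenig[OF mg' M AB(1) AB' AB(3) e(1) pq(3) pq(1) pq(2) e(2)] by blast
  have Xne: "X \<noteq> {}" using X(3) unfolding nbr_def by auto
  have sh: "card X + 1 \<le> card (nbr E ends X)" using strict_hall[OF mc AB X(1) Xne pq(1) X(2)] .
  have sub: "nbr E ends X \<subseteq> insert a (nbr (E - {f}) ends X)"
  proof
    fix v assume "v \<in> nbr E ends X"
    then obtain g z where g: "g \<in> E" "z \<in> X" "ends g = {z, v}" unfolding nbr_def by auto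
    show "v \<in> insert a (nbr (E - {f}) ends X)"
    proof (cases "g = f")
      case True
      hence "{z, v} = {u, a}" using g f by simp
      moreover have "z \<noteq> a" using g X(1) f AB(1) by auto
      ultimately show ?thesis by (auto simp: doubleton_eq_iff)
    next
      case False thus ?thesis using g unfolding nbr_def by auto
    qed
  qed
  have sub2: "nbr (E - {f}) ends X \<subseteq> nbr E ends X" unfolding nbr_def by auto
  have fN: "finite (nbr E ends X)" using finite_subset[OF nbr_sub_V[OF mg] fV] .
  have uX: "u \<in> X"
  proof (rule ccontr)
    assume "u \<notin> X"
    have "nbr E ends X \<subseteq> nbr (E - {f}) ends X"
    proof
      fix v assume "v \<in> nbr E ends X"
      then obtain g z where g: "g \<in> E" "z \<in> X" "ends g = {z, v}" unfolding nbr_def by auto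
      have "g \<noteq> f"
      proof
        assume "g = f"
        hence "{z, v} = {u, a}" using g f by simp
        moreover have "z \<noteq> a" using g X(1) f AB(1) by auto
        ultimately show False using \<open>u \<notin> X\<close> g by (auto simp: doubleton_eq_iff)
      qed
      thus "v \<in> nbr (E - {f}) ends X" using g unfolding nbr_def by auto
    qed
    hence "card (nbr E ends X) \<le> card (nbr (E - {f}) ends X)"
      using card_mono[OF finite_subset[OF nbr_sub_V[OF mg'] fV]] by blast
    thus False using sh X(4) by simp
  qed
  have aN: "a \<notin> nbr (E - {f}) ends X"
  proof
    assume "a \<in> nbr (E - {f}) ends X"
    hence "nbr E ends X \<subseteq> nbr (E - {f}) ends X" using sub by auto
    hence "card (nbr E ends X) \<le> card (nbr (E - {f}) ends X)"
      using card_mono[OF finite_subset[OF nbr_sub_V[OF mg'] fV]] by blast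
    thus False using sh X(4) by simp
  qed
  have "card (nbr E ends X) \<le> card (insert a (nbr (E - {f}) ends X))"
    using card_mono[OF _ sub] finite_subset[OF nbr_sub_V[OF mg'] fV] by simp
  also have "\<dots> \<le> card (nbr (E - {f}) ends X) + 1"
    using card_insert_le_m1 by (simp add: card_insert_if finite_subset[OF nbr_sub_V[OF mg'] fV])
  finally have "card (nbr E ends X) \<le> card X + 1" using X(4) by simp
  moreover have "\<forall>g\<in>E - {f}. \<forall>z\<in>X. ends g \<noteq> {z, a}" using aN unfolding nbr_def by auto
  ultimately show ?thesis using X(1) uX by blast
qed

theorem mainTheorem4:
  fixes V :: "'v set" and E :: "'e set" and ends :: "'e \<Rightarrow> 'v set"
    and u :: 'v and f1 f2 :: 'e
  assumes "matching_covered V E ends"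
    and "bipartite V E ends"
    and "u \<in> V"
    and "degree E ends u \<ge> 3"
    and "f1 \<in> E" and "f2 \<in> E"
    and "u \<in> ends f1" and "u \<in> ends f2"
    and "in_common_4cycle V E ends f1 f2"
  shows "removable V E ends f1 \<or> removable V E ends f2"
proof (rule ccontr)
  assume nr: "\<not> (removable V E ends f1 \<or> removable V E ends f2)"
  note mc = assms(1)
  have mg: "multigraph V E ends" using mc unfolding matching_covered_def by auto
  have fV: "finite V" using mg unfolding multigraph_def by auto
  have gc: "graph_connected V E ends" using mc unfolding matching_covered_def by auto
  obtain A B where AB: "A \<inter> B = {}" "\<forall>g\<in>E. \<exists>a\<in>A. \<exists>b\<in>B. ends g = {a, b}" "A \<union> B = V" and uA: "u \<in> A"
  proof -
    obtain A0 B0 where AB0: "A0 \<union> B0 = V" "A0 \<inter> B0 = {}" "\<forall>e\<in>E. \<exists>a\<in>A0. \<exists>b\<in>B0. ends e = {a, b}"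
      using assms(2) unfolding bipartite_def by blast
    show ?thesis
    proof (cases "u \<in> A0")
      case True thus ?thesis using that AB0 by blast
    next
      case False
      hence "u \<in> B0" using AB0 assms(3) by auto
      moreover have "\<forall>g\<in>E. \<exists>a\<in>B0. \<exists>b\<in>A0. ends g = {a, b}" using AB0(3) by (metis insert_commute)
      moreover have "B0 \<inter> A0 = {}" "B0 \<union> A0 = V" using AB0 by auto
      ultimately show ?thesis using that by blast
    qed
  qed
  obtain u' a w b f3 f4 where cyc: "distinct [u', a, w, b]" "{u', a, w, b} \<subseteq> V"
      "f3 \<in> E" "f4 \<in> E" "ends f1 = {u', a}" "ends f3 = {a, w}" "ends f4 = {w, b}" "ends f2 = {b, u'}"
    using assms(9) unfolding in_common_4cycle_def by (elim exE conjE) (rule that; assumption)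
  have "u = u'" using assms(7,8) cyc by auto
  hence c: "ends f1 = {u, a}" "ends f2 = {b, u}" "u \<noteq> a" "u \<noteq> b" "a \<noteq> b" "a \<noteq> w" "w \<noteq> b" "u \<noteq> w"
    using cyc by auto
  have aB: "a \<in> B" using side(1)[OF AB(1,2) assms(5) c(1) uA] .
  have bB: "b \<in> B" using side(1)[OF AB(1,2) assms(6)] c(2) uA by (simp add: insert_commute)
  have wA: "w \<in> A" using side(2)[OF AB(1,2) cyc(3,6) aB] .
  have f12: "f1 \<noteq> f2" "f3 \<noteq> f1" "f4 \<noteq> f2" "f2 \<noteq> f1" "f4 \<noteq> f1" "f3 \<noteq> f2"
    using c cyc by (auto simp: doubleton_eq_iff)
  have c2': "ends f2 = {u, b}" using c(2) by (simp add: insert_commute)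
  have fl: "ends f1 = {a, u}" "ends f3 = {w, a}" "ends f4 = {b, w}" using c(1) cyc(6,7) by (simp_all add: insert_commute)
  have gc1: "graph_connected V (E - {f1}) ends"
  proof (rule conn_remove[OF gc c(1)])
    have p1: "(u, b) \<in> (adj_rel (E - {f1}) ends)\<^sup>*" using adjI[where ends=ends, OF assms(6) f12(4) c2'] .
    have p2: "(b, w) \<in> (adj_rel (E - {f1}) ends)\<^sup>*" using adjI[where ends=ends, OF cyc(4) f12(5) fl(3)] .
    have p3: "(w, a) \<in> (adj_rel (E - {f1}) ends)\<^sup>*" using adjI[where ends=ends, OF cyc(3) f12(2) fl(2)] .
    have q1: "(b, u) \<in> (adj_rel (E - {f1}) ends)\<^sup>*" using adjI[where ends=ends, OF assms(6) f12(4) c(2)] .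
    have q2: "(w, b) \<in> (adj_rel (E - {f1}) ends)\<^sup>*" using adjI[where ends=ends, OF cyc(4) f12(5) cyc(7)] .
    have q3: "(a, w) \<in> (adj_rel (E - {f1}) ends)\<^sup>*" using adjI[where ends=ends, OF cyc(3) f12(2) cyc(6)] .
    show "(u, a) \<in> (adj_rel (E - {f1}) ends)\<^sup>*" using p1 p2 p3 by (meson rtrancl_trans)
    show "(a, u) \<in> (adj_rel (E - {f1}) ends)\<^sup>*" using q1 q2 q3 by (meson rtrancl_trans)
  qed
  have gc2: "graph_connected V (E - {f2}) ends"
  proof (rule conn_remove[OF gc c(2)])
    have p1: "(u, a) \<in> (adj_rel (E - {f2}) ends)\<^sup>*" using adjI[where ends=ends, OF assms(5) f12(1) c(1)] .
    have p2: "(a, w) \<in> (adj_rel (E - {f2}) ends)\<^sup>*" using adjI[where ends=ends, OF cyc(3) f12(6) cyc(6)] .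
    have p3: "(w, b) \<in> (adj_rel (E - {f2}) ends)\<^sup>*" using adjI[where ends=ends, OF cyc(4) f12(3) cyc(7)] .
    have q1: "(a, u) \<in> (adj_rel (E - {f2}) ends)\<^sup>*" using adjI[where ends=ends, OF assms(5) f12(1) fl(1)] .
    have q2: "(w, a) \<in> (adj_rel (E - {f2}) ends)\<^sup>*" using adjI[where ends=ends, OF cyc(3) f12(6) fl(2)] .
    have q3: "(b, w) \<in> (adj_rel (E - {f2}) ends)\<^sup>*" using adjI[where ends=ends, OF cyc(4) f12(3) fl(3)] .
    show "(b, u) \<in> (adj_rel (E - {f2}) ends)\<^sup>*" using q1 q2 q3 by (meson rtrancl_trans)
    show "(u, b) \<in> (adj_rel (E - {f2}) ends)\<^sup>*" using p1 p2 p3 by (meson rtrancl_trans)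
  qed
  have aV: "a \<in> V" "b \<in> V" using aB bB AB by auto
  obtain M3 where M3: "perfect_matching V E ends M3" "f3 \<in> M3"
    using mc cyc(3) unfolding matching_covered_def admissible_def by blast
  have "f1 \<notin> M3"
  proof
    assume "f1 \<in> M3"
    hence "f1 = f3" using pm_unique[OF M3(1) aV(1) _ M3(2)] c(1) cyc(6) by auto
    thus False using f12 by auto
  qed
  hence PM1: "perfect_matching V (E - {f1}) ends M3" using M3(1) unfolding perfect_matching_def by auto
  obtain M4 where M4: "perfect_matching V E ends M4" "f4 \<in> M4"
    using mc cyc(4) unfolding matching_covered_def admissible_def by blast
  have "f2 \<notin> M4"
  proof
    assume "f2 \<in> M4"
    hence "f2 = f4" using pm_unique[OF M4(1) aV(2) _ M4(2)] c(2) cyc(7) by auto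
    thus False using f12 by auto
  qed
  hence PM2: "perfect_matching V (E - {f2}) ends M4" using M4(1) unfolding perfect_matching_def by auto
  obtain X where X: "X \<subseteq> A" "u \<in> X" "\<forall>g\<in>E - {f1}. \<forall>z\<in>X. ends g \<noteq> {z, a}" "card (nbr E ends X) \<le> card X + 1"
    using side_set[OF mc AB assms(5) c(1) uA aB gc1 PM1] nr by blast
  obtain Y where Y: "Y \<subseteq> A" "u \<in> Y" "\<forall>g\<in>E - {f2}. \<forall>z\<in>Y. ends g \<noteq> {z, b}" "card (nbr E ends Y) \<le> card Y + 1"
    using side_set[OF mc AB assms(6) c2' uA bB gc2 PM2] nr by blast
  have "card {e\<in>E. u \<in> ends e} \<ge> 3" using assms(4) unfolding degree_def .
  moreover have "finite {e\<in>E. u \<in> ends e}" using mg unfolding multigraph_def by auto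
  ultimately obtain g where g: "g \<in> E" "u \<in> ends g" "g \<noteq> f1" "g \<noteq> f2"
  proof -
    have "\<not> {e\<in>E. u \<in> ends e} \<subseteq> {f1, f2}"
    proof
      assume "{e\<in>E. u \<in> ends e} \<subseteq> {f1, f2}"
      hence "card {e\<in>E. u \<in> ends e} \<le> card {f1, f2}" by (rule card_mono[rotated]) simp
      also have "\<dots> \<le> 2" by (simp add: card_insert_if)
      finally show False using \<open>card {e\<in>E. u \<in> ends e} \<ge> 3\<close> by simp
    qed
    thus ?thesis using that by blast
  qed
  obtain a' c where ac: "a' \<in> A" "c \<in> B" "ends g = {a', c}" using AB g by blast
  have "u = a'" using ac g uA AB(1) by auto
  hence gc': "ends g = {u, c}" using ac by simp
  have ca: "c \<noteq> a" using X(3) g gc' X(2) by auto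
  have cb: "c \<noteq> b" using Y(3) g gc' Y(2) by auto
  let ?N = "nbr E ends"
  have fN: "\<And>Z. finite (?N Z)" using finite_subset[OF nbr_sub_V[OF mg] fV] .
  have fA: "finite A" using AB fV by (auto intro: finite_subset)
  have fX: "finite X" "finite Y" using X(1) Y(1) fA by (auto intro: finite_subset)
  have wX: "w \<notin> X"
  proof
    assume "w \<in> X"
    moreover have "f3 \<in> E - {f1}" using cyc(3) f12(2) by blast
    ultimately have "ends f3 \<noteq> {w, a}" using X(3) by blast
    thus False using fl(2) by contradiction
  qed
  have wY: "w \<notin> Y"
  proof
    assume "w \<in> Y"
    moreover have "f4 \<in> E - {f2}" using cyc(4) f12(3) by blast
    ultimately have "ends f4 \<noteq> {w, b}" using Y(3) by blast
    thus False using cyc(7) by contradiction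
  qed
  have "card (X \<union> Y) + 1 \<le> card (?N (X \<union> Y))"
  proof (rule strict_hall[OF mc AB])
    show "X \<union> Y \<subseteq> A" using X(1) Y(1) by blast
    show "X \<union> Y \<noteq> {}" using X(2) by blast
    show "w \<in> A" using wA .
    show "w \<notin> X \<union> Y" using wX wY by blast
  qed
  moreover have "?N (X \<union> Y) = ?N X \<union> ?N Y" unfolding nbr_def by blast
  ultimately have UU: "card (X \<union> Y) + 1 \<le> card (?N X \<union> ?N Y)" by simp
  have "card (?N X \<union> ?N Y) + card (?N X \<inter> ?N Y) = card (?N X) + card (?N Y)"
    using card_Un_Int[OF fN fN] by simp
  moreover have "card (X \<union> Y) + card (X \<inter> Y) = card X + card Y"
    using card_Un_Int[OF fX] by simp
  ultimately have NI: "card (?N X \<inter> ?N Y) \<le> card (X \<inter> Y) + 1" using X(4) Y(4) UU by linarith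
  have uXY: "u \<in> X \<inter> Y" using X(2) Y(2) by auto
  have inN: "\<And>h v. h \<in> E \<Longrightarrow> ends h = {u, v} \<Longrightarrow> v \<in> ?N X \<inter> ?N Y"
    using uXY unfolding nbr_def by blast
  have abc: "{a, b, c} \<subseteq> ?N X \<inter> ?N Y"
    using inN[OF assms(5) c(1)] inN[OF assms(6) c2'] inN[OF g(1) gc'] by auto
  have fXY: "finite (X \<inter> Y)" using fX by auto
  show False
  proof (cases "X \<inter> Y - {u} = {}")
    case True
    hence "X \<inter> Y = {u}" using uXY by auto
    hence "card (?N X \<inter> ?N Y) \<le> 2" using NI by simp
    moreover have "card {a, b, c} = 3" using c ca cb by simp
    moreover have "card {a, b, c} \<le> card (?N X \<inter> ?N Y)" using card_mono[OF _ abc] fN by blast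
    ultimately show False by simp
  next
    case False
    let ?Z = "X \<inter> Y - {u}"
    have Zc: "card ?Z + 1 \<le> card (?N ?Z)"
    proof (rule strict_hall[OF mc AB _ False wA])
      show "?Z \<subseteq> A" using X(1) by blast
      show "w \<notin> ?Z" using wX by blast
    qed
    have hZ: "?N ?Z \<subseteq> (?N X \<inter> ?N Y) - {a, b}"
    proof
      fix v assume "v \<in> ?N ?Z"
      then obtain h z where h: "h \<in> E" "z \<in> ?Z" "ends h = {z, v}" unfolding nbr_def by auto
      have zA: "z \<in> A" using h X(1) by auto
      have "v \<in> ?N X \<inter> ?N Y" using h unfolding nbr_def by blast
      moreover have "v \<noteq> a"
      proof
        assume va: "v = a"
        have "h \<noteq> f1"
        proof
          assume "h = f1"
          hence "{z, a} = {u, a}" using h c(1) va by simp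
          hence "z = u" using zA aB AB(1) by (auto simp: doubleton_eq_iff)
          thus False using h by auto
        qed
        thus False using X(3) h va by auto
      qed
      moreover have "v \<noteq> b"
      proof
        assume vb: "v = b"
        have "h \<noteq> f2"
        proof
          assume "h = f2"
          hence "{z, b} = {u, b}" using h c2' vb by simp
          hence "z = u" using zA bB AB(1) by (auto simp: doubleton_eq_iff)
          thus False using h by auto
        qed
        thus False using Y(3) h vb by auto
      qed
      ultimately show "v \<in> (?N X \<inter> ?N Y) - {a, b}" by auto
    qed
    have fI: "finite ((?N X \<inter> ?N Y) - {a, b})" using fN[of X] by simp
    have "card (?N ?Z) \<le> card ((?N X \<inter> ?N Y) - {a, b})" using card_mono[OF fI hZ] .
    moreover have "card ((?N X \<inter> ?N Y) - {a, b}) = card (?N X \<inter> ?N Y) - 2"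
      using abc c(5) fN by (simp add: card_Diff_subset)
    moreover have "card ?Z = card (X \<inter> Y) - 1" using uXY fXY by simp
    moreover have "card (X \<inter> Y) \<ge> 1" using uXY fXY by (metis One_nat_def Suc_leI card_gt_0_iff empty_iff)
    ultimately show False using NI Zc by linarith
  qed
qed

end
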